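(* Let $n\geq 0$ be an integer, $r,s\in\mathbf{N}$ and $k\in\mathbf{Z}$. Then \[\tilde{A}_{n}^{(r,k)}(x)=\sum_{m=0}^{n}\left\{\sum_{l=0}^{n-m}\binom{n}{l}S_{1}(n-l,m)\tilde{A}_{l}^{(r+s,k)}(s)\right\}B_{m}^{(s)}(x).\]
   Context: For $k\in\mathbf{Z}$, $Lif_{k}(x)=\sum_{m=0}^{\infty}\frac{x^{m}}{m!(m+1)^{k}}$. For integers $r\geq 0$, $k\in\mathbf{Z}$, the polynomials $\tilde{A}_{n}^{(r,k)}(x)$ are defined by \[\left(\frac{t}{(1+t)\log(1+t)}\right)^{r}Lif_{k}\left(-\log(1+t)\right)(1+t)^{x}=\sum_{n=0}^{\infty}\tilde{A}_{n}^{(r,k)}(x)\frac{t^{n}}{n!}.\] The Bernoulli polynomials of order $s$ are defined by $\left(\frac{t}{e^{t}-1}\right)^{s}e^{xt}=\sum_{n=0}^{\infty}B_{n}^{(s)}(x)\frac{t^{n}}{n!}$. $S_{1}(n,m)$ denotes the signed Stirling numbers of the first kind, defined by $x(x-1)\cdots(x-n+1)=\sum_{m=0}^{n}S_{1}(n,m)x^{m}$. *)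

theory Defs
  imports "HOL-Computational_Algebra.Computational_Algebra"
begin

text \<open>Power series of log(1+t) is fps_ln 1; (1+t)^x is fps_binomial x.\<close>

definition Lif_fps :: "int \<Rightarrow> real fps" where
  "Lif_fps k = Abs_fps (\<lambda>m. 1 / (fact m * (of_nat (m + 1)) powi k))"

definition Atilde_gf :: "nat \<Rightarrow> int \<Rightarrow> real \<Rightarrow> real fps" where
  "Atilde_gf r k x =
     (fps_X / ((1 + fps_X) * fps_ln 1)) ^ r
     * (Lif_fps k oo (- fps_ln 1))
     * fps_binomial x"

definition Atilde :: "nat \<Rightarrow> int \<Rightarrow> nat \<Rightarrow> real \<Rightarrow> real" where
  "Atilde r k n x = fact n * (Atilde_gf r k x $ n)"

definition bernoulli_gf :: "nat \<Rightarrow> real \<Rightarrow> real fps" where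
  "bernoulli_gf s x = (fps_X / (fps_exp 1 - 1)) ^ s * fps_exp x"

definition bernoulli_poly_ord :: "nat \<Rightarrow> nat \<Rightarrow> real \<Rightarrow> real" where
  "bernoulli_poly_ord s n x = fact n * (bernoulli_gf s x $ n)"

definition S1 :: "nat \<Rightarrow> nat \<Rightarrow> int" where
  "S1 n m = coeff (\<Prod>i<n. [:- of_nat i, 1:]) m"

end

theory Submission
  imports Defs
begin

lemma exp_ln: "fps_exp (c::real) oo fps_ln 1 = fps_binomial c"
proof -
  let ?a = "fps_exp c oo fps_ln 1"
  have "fps_deriv ?a = (fps_deriv (fps_exp c) oo fps_ln 1) * fps_deriv (fps_ln 1)"
    by (rule fps_compose_deriv) simp
  also have "\<dots> = (fps_const c * ?a) / (1 + fps_X)"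
    by (simp add: fps_ln_deriv fps_compose_mult_distrib fps_divide_unit)
  finally have "?a = fps_const (?a $ 0) * fps_binomial c"
    using fps_binomial_ODE_unique by blast
  then show ?thesis by simp
qed

lemma map_poly_of_int_mult:
  "map_poly (of_int :: int \<Rightarrow> real) (p * q) = map_poly of_int p * map_poly of_int q"
  by (rule poly_eqI) (simp add: coeff_map_poly coeff_mult)

lemma map_poly_of_int_prod:
  "map_poly (of_int :: int \<Rightarrow> real) (\<Prod>i<n. [:- of_nat i, 1:]) = (\<Prod>i<n. [:- of_nat i, 1:])"
proof (induction n)
  case (Suc n)
  show ?case
    unfolding prod.lessThan_Suc map_poly_of_int_mult Suc.IH
    by (simp add: map_poly_pCons)
qed simp

lemma S1_real: "real_of_int (S1 n m) = coeff (\<Prod>i<n. [:- of_nat i, 1:] :: real poly) m"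
  unfolding S1_def map_poly_of_int_prod[symmetric] by (simp add: coeff_map_poly)

lemma ln_pow_coeff:
  assumes "m \<le> n"
  shows "fps_ln (1::real) ^ m $ n = real_of_int (S1 n m) * fact m / fact n"
proof -
  define p :: "real poly" where "p = (\<Prod>i<n. [:- of_nat i, 1:])"
  define q :: "real poly" where "q = (\<Sum>j\<le>n. monom (fact n / fact j * (fps_ln 1 ^ j $ n)) j)"
  have "poly p x = poly q x" for x
  proof -
    have "poly p x = fact n * (x gchoose n)"
      by (simp add: p_def poly_prod gbinomial_mult_fact atLeast0LessThan)
    also have "\<dots> = fact n * ((fps_exp x oo fps_ln 1) $ n)" by (simp add: exp_ln)
    also have "\<dots> = poly q x"
      by (simp add: q_def fps_compose_nth poly_sum poly_monom sum_distrib_left atLeast0AtMost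
          field_simps)
    finally show ?thesis .
  qed
  then have "p = q" using poly_eq_poly_eq_iff by blast
  then have "coeff p m = coeff q m" by simp
  also have "coeff q m = fact n / fact m * (fps_ln 1 ^ m $ n)"
    using assms by (simp add: q_def coeff_sum)
  finally show ?thesis using S1_real[of n m] by (simp add: p_def field_simps)
qed

lemma subdeg_ln: "fps_ln (1::real) \<noteq> 0" "subdegree (fps_ln (1::real)) = 1"
proof -
  have "fps_ln (1::real) $ 1 \<noteq> 0" by (simp add: fps_ln_nth)
  then show "fps_ln (1::real) \<noteq> 0" by auto
  show "subdegree (fps_ln (1::real)) = 1"
    by (rule subdegreeI) (auto simp: fps_ln_nth)
qed

lemma subdeg_exp: "fps_exp (1::real) - 1 \<noteq> 0" "subdegree (fps_exp (1::real) - 1) = 1"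
proof -
  have "(fps_exp (1::real) - 1) $ 1 \<noteq> 0" by simp
  then show "fps_exp (1::real) - 1 \<noteq> 0" by auto
  show "subdegree (fps_exp (1::real) - 1) = 1"
    by (rule subdegreeI) auto
qed

lemma key_fps:
  "Atilde_gf r k x = Atilde_gf (r + s) k (of_nat s) * (bernoulli_gf s x oo fps_ln 1)"
proof -
  define L :: "real fps" where "L = fps_ln 1"
  define P where "P = fps_X / ((1 + fps_X) * L)"
  define Q where "Q = fps_X / (fps_exp (1::real) - 1)"
  define Lc where "Lc = Lif_fps k oo (- L)"
  have L0: "L $ 0 = 0" by (simp add: L_def)
  have g0: "(1 + fps_X) * L \<noteq> 0" using subdeg_ln by (simp add: L_def)
  have "subdegree ((1 + fps_X) * L) = 1" using subdeg_ln by (simp add: L_def)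
  then have P1: "P * ((1 + fps_X) * L) = fps_X"
    unfolding P_def using g0 by (intro fps_times_divide_eq) auto
  have Q1: "Q * (fps_exp 1 - 1) = fps_X"
    unfolding Q_def using subdeg_exp by (intro fps_times_divide_eq) auto
  have EL: "(fps_exp 1 - 1) oo L = fps_X"
    using fps_binomial_of_nat[of 1, where ?'a=real]
    by (simp add: L_def fps_compose_sub_distrib exp_ln)
  have XL: "fps_X oo L = L"
  proof (rule fps_ext)
    fix n
    show "(fps_X oo L) $ n = L $ n"
    proof (cases n)
      case (Suc m)
      then have "(fps_X oo L) $ n = (\<Sum>i=0..n. (if i = 1 then L $ n else 0))"
        unfolding fps_compose_nth by (intro sum.cong) (auto simp: fps_X_nth)
      also have "\<dots> = L $ n" using Suc by simp
      finally show ?thesis .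
    qed (simp add: L0)
  qed
  have "(Q oo L) * fps_X = L"
    using arg_cong[OF Q1, of "\<lambda>f. f oo L"] by (simp add: fps_compose_mult_distrib L0 EL XL)
  then have "(P * (1 + fps_X) * (Q oo L)) * fps_X = 1 * fps_X"
    using P1 by (metis mult.assoc mult_1)
  then have PQ: "P * (1 + fps_X) * (Q oo L) = 1"
    by (rule mult_right_cancel[THEN iffD1, rotated]) simp
  have B: "bernoulli_gf s x oo L = (Q oo L) ^ s * fps_binomial x"
    by (simp add: bernoulli_gf_def Q_def[symmetric] fps_compose_mult_distrib fps_compose_power L0
        L_def exp_ln)
  have "Atilde_gf (r + s) k (of_nat s) * (bernoulli_gf s x oo L)
      = P ^ r * Lc * fps_binomial x * (P * (1 + fps_X) * (Q oo L)) ^ s"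
    unfolding B Atilde_gf_def P_def[symmetric] L_def[symmetric] Lc_def[symmetric] fps_binomial_of_nat
    by (simp add: power_add power_mult_distrib ac_simps)
  also have "\<dots> = Atilde_gf r k x"
    unfolding PQ by (simp add: Atilde_gf_def P_def L_def Lc_def)
  finally show ?thesis by (simp add: L_def)
qed

lemma tri_ext:
  fixes f :: "nat \<Rightarrow> nat \<Rightarrow> real"
  assumes "l \<le> n"
  shows "(\<Sum>m=0..n-l. f l m) = (\<Sum>m=0..n. if l + m \<le> n then f l m else 0)"
proof -
  have "{m\<in>{0..n}. l + m \<le> n} = {0..n-l}" using assms by auto
  then show ?thesis by (simp add: sum.inter_filter[symmetric])
qed

lemma tri_swap:
  fixes f :: "nat \<Rightarrow> nat \<Rightarrow> real"
  shows "(\<Sum>l=0..n. \<Sum>m=0..n-l. f l m) = (\<Sum>m=0..n. \<Sum>l=0..n-m. f l m)"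
proof -
  have "(\<Sum>l=0..n. \<Sum>m=0..n-l. f l m) = (\<Sum>l=0..n. \<Sum>m=0..n. if l + m \<le> n then f l m else 0)"
    by (intro sum.cong refl tri_ext) auto
  also have "\<dots> = (\<Sum>m=0..n. \<Sum>l=0..n. if l + m \<le> n then f l m else 0)"
    by (rule sum.swap)
  also have "\<dots> = (\<Sum>m=0..n. \<Sum>l=0..n-m. f l m)"
  proof (rule sum.cong[OF refl])
    fix m assume "m \<in> {0..n}"
    then have "(\<Sum>l=0..n-m. f l m) = (\<Sum>l=0..n. if m + l \<le> n then f l m else 0)"
      using tri_ext[of m n "\<lambda>a b. f b a"] by simp
    then show "(\<Sum>l=0..n. if l + m \<le> n then f l m else 0) = (\<Sum>l=0..n-m. f l m)"
      by (simp add: add.commute)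
  qed
  finally show ?thesis .
qed

theorem theorem7:
  fixes n r s :: nat and k :: int and x :: real
  shows "Atilde r k n x =
    (\<Sum>m = 0..n. (\<Sum>l = 0..n - m. of_nat (n choose l) * of_int (S1 (n - l) m)
        * Atilde (r + s) k l (of_nat s)) * bernoulli_poly_ord s m x)"
proof -
  define A where "A = Atilde_gf (r + s) k (of_nat s)"
  define C where "C = bernoulli_gf s x oo fps_ln 1"
  have Cn: "C $ j = (\<Sum>m=0..j. of_int (S1 j m) * bernoulli_poly_ord s m x) / fact j" for j
  proof -
    have "C $ j = (\<Sum>m=0..j. bernoulli_gf s x $ m * (fps_ln 1 ^ m $ j))"
      by (simp add: C_def fps_compose_nth)
    also have "\<dots> = (\<Sum>m=0..j. of_int (S1 j m) * bernoulli_poly_ord s m x / fact j)"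
      by (intro sum.cong refl) (simp add: ln_pow_coeff bernoulli_poly_ord_def)
    finally show ?thesis by (simp add: sum_divide_distrib)
  qed
  have "Atilde r k n x = fact n * (A * C) $ n"
    by (simp add: Atilde_def A_def C_def key_fps[of r k x s])
  also have "\<dots> = (\<Sum>l=0..n. \<Sum>m=0..n-l. of_nat (n choose l) * of_int (S1 (n - l) m)
        * Atilde (r + s) k l (of_nat s) * bernoulli_poly_ord s m x)"
  proof -
    have "fact n * (A * C) $ n = (\<Sum>l=0..n. fact n * (A $ l * C $ (n - l)))"
      by (simp add: fps_mult_nth sum_distrib_left)
    also have "\<dots> = (\<Sum>l=0..n. \<Sum>m=0..n-l. of_nat (n choose l) * of_int (S1 (n - l) m)
        * Atilde (r + s) k l (of_nat s) * bernoulli_poly_ord s m x)"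
    proof (intro sum.cong refl)
      fix l assume l: "l \<in> {0..n}"
      have "fact n * (A $ l * C $ (n - l)) = of_nat (n choose l) * Atilde (r + s) k l (of_nat s)
          * (\<Sum>m=0..n-l. of_int (S1 (n - l) m) * bernoulli_poly_ord s m x)"
        using l by (simp add: Cn Atilde_def A_def binomial_fact field_simps)
      then show "fact n * (A $ l * C $ (n - l)) = (\<Sum>m=0..n-l. of_nat (n choose l) * of_int (S1 (n - l) m)
        * Atilde (r + s) k l (of_nat s) * bernoulli_poly_ord s m x)"
        by (simp add: sum_distrib_left ac_simps)
    qed
    finally show ?thesis .
  qed
  also have "\<dots> = (\<Sum>m = 0..n. (\<Sum>l = 0..n - m. of_nat (n choose l) * of_int (S1 (n - l) m)
        * Atilde (r + s) k l (of_nat s)) * bernoulli_poly_ord s m x)"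
    by (subst tri_swap) (simp add: sum_distrib_right)
  finally show ?thesis .
qed

end
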